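(* Consider a stochastic block model with $K$ communities, membership matrix $\Theta\in\mathbb M_{n,K}$ with community sizes $n_1,\dots,n_K\ge1$, and symmetric $B\in[0,1]^{K\times K}$ with $\mathrm{rank}(B)=K'<K$. Let $P=\Theta B\Theta^\intercal=U\Sigma U^\intercal$ be its eigenvalue decomposition with $U\in\mathbb R^{n\times K'}$ having orthonormal columns. Let $\Delta=\mathrm{diag}(\sqrt{n_1},\dots,\sqrt{n_K})$ and $\Delta B\Delta=LDL^\intercal$ the eigenvalue decomposition with $L\in\mathbb R^{K\times K'}$. Suppose there exist deterministic sequences $\{\eta_n\}$ and $\{\iota_n\}$ such that $$\min_{1\le k<l\le K}B_{kk}+B_{ll}-2B_{kl}\ge\eta_n>0$$ and $0<\Sigma_{ii}\le\iota_n$ for all $1\le i\le K'$. Then $\min_{k\ne l}\|L_{k\ast}/\sqrt{n_k}-L_{l\ast}/\sqrt{n_l}\|_2\ge\xi_n$ with $\xi_n=\sqrt{\eta_n/\iota_n}$.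
   Context: $\mathbb M_{n,K}$: $n\times K$ 0/1 matrices with exactly one $1$ per row; $n_k$ is the number of rows with their $1$ in column $k$. $M_{k\ast}$ denotes the $k$-th row of $M$. *)

theory Defs
  imports "HOL-Analysis.Analysis"
begin

definition membership_matrix :: "real^'k^'n \<Rightarrow> bool" where
  "membership_matrix Theta \<longleftrightarrow>
     (\<forall>i j. Theta $ i $ j = 0 \<or> Theta $ i $ j = 1) \<and>
     (\<forall>i. \<exists>!j. Theta $ i $ j = 1)"

definition comm_size :: "real^'k^'n \<Rightarrow> 'k \<Rightarrow> nat" where
  "comm_size Theta k = card {i. Theta $ i $ k = 1}"

definition diag_mat :: "real^'n^'n \<Rightarrow> bool" where
  "diag_mat M \<longleftrightarrow> (\<forall>i j. i \<noteq> j \<longrightarrow> M $ i $ j = 0)"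

end

theory Submission
  imports Defs
begin

lemma inner_mv: "inner x ((A::real^'m^'n) *v y) = inner (transpose A *v x) y"
  by (simp add: dot_lmul_matrix)

lemma bessel_aux:
  fixes U :: "real^'r^'n"
  assumes "transpose U ** U = mat 1"
  shows "norm (transpose U *v z) ^ 2 \<le> norm z ^ 2"
proof -
  let ?s = "transpose U *v z"
  have gen: "transpose U *v (U *v y) = y" for y
    by (simp only: matrix_vector_mul_assoc assms matrix_vector_mul_lid)
  have e1: "inner (U *v ?s) (U *v ?s) = inner ?s ?s"
    using inner_mv[of "U *v ?s" U ?s] gen[of ?s] by simp
  have e2: "inner z (U *v ?s) = inner ?s ?s"
    using inner_mv[of z U ?s] .
  have e3: "inner (U *v ?s) z = inner ?s ?s"
    using e2 by (simp add: inner_commute)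
  have "0 \<le> inner (z - U *v ?s) (z - U *v ?s)" by simp
  also have "\<dots> = inner z z - inner ?s ?s"
    unfolding inner_diff_left inner_diff_right e1 e2 e3 by (simp add: inner_commute)
  finally show ?thesis by (simp add: power2_norm_eq_inner)
qed

lemma diag_quad:
  fixes S :: "real^'r^'r"
  assumes "diag_mat S" "\<forall>i. S $ i $ i \<le> c"
  shows "inner s (S *v s) \<le> c * norm s ^ 2"
proof -
  have "inner s (S *v s) = (\<Sum>i\<in>UNIV. S $ i $ i * (s $ i)^2)"
  proof -
    have "(S *v s) $ j = S $ j $ j * s $ j" for j
      using assms(1) unfolding diag_mat_def matrix_vector_mult_def
      by (simp add: sum.remove[of UNIV j])
    thus ?thesis by (simp add: inner_vec_def power2_eq_square mult.commute mult.left_commute)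
  qed
  also have "\<dots> \<le> (\<Sum>i\<in>UNIV. c * (s $ i)^2)"
    by (rule sum_mono) (simp add: assms(2) mult_right_mono)
  also have "\<dots> = c * norm s ^ 2"
  proof -
    have "norm s ^ 2 = inner s s" by (simp only: power2_norm_eq_inner)
    thus ?thesis by (simp add: sum_distrib_left inner_vec_def power2_eq_square)
  qed
  finally show ?thesis .
qed



lemma if0_mult: "(if P then a else 0) * (y::real) = (if P then a * y else 0)"
  "y * (if P then a else 0) = (if P then y * a else 0)" by simp_all

lemma gram:
  fixes Theta :: "real^'k^'n"
  assumes memb: "membership_matrix Theta"
  shows "transpose Theta ** Theta = (\<chi> a b. if a = b then real (comm_size Theta a) else 0)"
proof -
  have h: "Theta $ i $ a * Theta $ i $ b = (if a = b \<and> Theta $ i $ a = 1 then 1 else 0)" for i a b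
  proof -
    have 01: "\<And>j. Theta $ i $ j = 0 \<or> Theta $ i $ j = 1" and u: "\<exists>!j. Theta $ i $ j = 1"
      using memb unfolding membership_matrix_def by auto
    show ?thesis using 01[of a] 01[of b] u by auto
  qed
  show ?thesis
  unfolding vec_eq_iff
  proof (intro allI)
    fix a b
    have "(transpose Theta ** Theta) $ a $ b = (\<Sum>i\<in>UNIV. Theta $ i $ a * Theta $ i $ b)"
      by (simp add: matrix_matrix_mult_def transpose_def)
    also have "\<dots> = (\<Sum>i\<in>UNIV. if a = b \<and> Theta $ i $ a = 1 then 1 else 0)"
      by (simp only: h)
    also have "\<dots> = (if a = b then real (comm_size Theta a) else 0)"
      by (auto simp: comm_size_def sum.If_cases)
    finally show "(transpose Theta ** Theta) $ a $ b = (\<chi> a b. if a = b then real (comm_size Theta a) else 0) $ a $ b"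
      by simp
  qed
qed

lemma diag_mult:
  fixes d :: "'k::finite \<Rightarrow> real"
  shows "(\<chi> i j. if i = j then d i else 0) *v (x::real^'k) = (\<chi> i. d i * x $ i)"
proof -
  have h: "(if P then a else 0) * y = (if P then a * y else 0)" for P and a y :: real by simp
  show ?thesis by (simp add: vec_eq_iff matrix_vector_mult_def h)
qed

theorem lemma2:
  fixes Theta :: "real^'k^'n"
    and B :: "real^'k^'k"
    and U :: "real^'r^'n" and Sigma :: "real^'r^'r"
    and L :: "real^'r^'k" and D :: "real^'r^'r"
    and Delta :: "real^'k^'k"
    and eta iota :: real
  assumes memb: "membership_matrix Theta"
    and sizes: "\<forall>k. comm_size Theta k \<ge> 1"
    and B_range: "\<forall>k l. 0 \<le> B $ k $ l \<and> B $ k $ l \<le> 1"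
    and B_sym: "transpose B = B"
    and rankB: "rank B = CARD('r)"
    and rank_lt: "CARD('r) < CARD('k)"
    and U_orth: "transpose U ** U = mat 1"
    and Sigma_diag: "diag_mat Sigma"
    and P_eig: "Theta ** B ** transpose Theta = U ** Sigma ** transpose U"
    and Delta_def: "Delta = (\<chi> i j. if i = j then sqrt (real (comm_size Theta i)) else 0)"
    and L_orth: "transpose L ** L = mat 1"
    and D_diag: "diag_mat D"
    and DBD_eig: "Delta ** B ** Delta = L ** D ** transpose L"
    and eta_pos: "eta > 0"
    and sep: "\<forall>k l. k \<noteq> l \<longrightarrow> B $ k $ k + B $ l $ l - 2 * B $ k $ l \<ge> eta"
    and Sigma_bd: "\<forall>i. 0 < Sigma $ i $ i \<and> Sigma $ i $ i \<le> iota"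
  shows "\<forall>k l. k \<noteq> l \<longrightarrow>
           norm ((1 / sqrt (real (comm_size Theta k))) *\<^sub>R (L $ k)
               - (1 / sqrt (real (comm_size Theta l))) *\<^sub>R (L $ l)) \<ge> sqrt (eta / iota)"
proof (intro allI impI)
  fix k l :: 'k
  assume kl: "k \<noteq> l"
  define nn where "nn = (\<lambda>m. real (comm_size Theta m))"
  have nn1: "nn m \<ge> 1" for m using sizes unfolding nn_def by (metis of_nat_1 of_nat_mono)
  have sq0: "sqrt (nn m) > 0" for m using nn1[of m] by simp
  define x :: "real^'k" where "x = (\<chi> m. (if m = k then 1 / sqrt (nn k) else 0) - (if m = l then 1 / sqrt (nn l) else 0))"
  define e :: "real^'k" where "e = (\<chi> m. (if m = k then 1 else 0) - (if m = l then 1 else 0))"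
  define v where "v = transpose L *v x"
  define M where "M = Delta ** B ** Delta"
  have Dsym: "transpose Delta = Delta"
    unfolding Delta_def by (simp add: vec_eq_iff transpose_def)
  have Dx: "Delta *v x = e"
  proof -
    have nzk: "comm_size Theta k \<noteq> 0" "comm_size Theta l \<noteq> 0"
      using sizes by (metis not_one_le_zero)+
    show ?thesis unfolding Delta_def x_def e_def diag_mult using nzk kl by (auto simp add: vec_eq_iff nn_def)
  qed
  have veq: "v = (1 / sqrt (nn k)) *\<^sub>R (L $ k) - (1 / sqrt (nn l)) *\<^sub>R (L $ l)"
    unfolding v_def x_def
    by (simp add: vec_eq_iff vector_matrix_mult_def right_diff_distrib sum_subtractf
        left_diff_distrib if0_mult)
  have Be: "inner e (B *v e) = B $ k $ k + B $ l $ l - 2 * B $ k $ l"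
  proof -
    have Blk: "B $ l $ k = B $ k $ l" using B_sym by (metis transpose_def vec_lambda_beta)
    have "B *v e = (\<chi> i. B $ i $ k - B $ i $ l)"
      unfolding e_def
      by (simp add: vec_eq_iff matrix_vector_mult_def right_diff_distrib sum_subtractf
          left_diff_distrib if0_mult)
    then show ?thesis
      unfolding e_def using kl Blk
      by (simp add: inner_vec_def left_diff_distrib sum_subtractf
          right_diff_distrib if0_mult)
  qed
  have q1: "inner x (M *v x) = inner e (B *v e)"
    unfolding M_def
    by (simp only: matrix_vector_mul_assoc[symmetric] inner_mv Dsym Dx)
  have q2: "inner x (M *v x) = inner v (D *v v)"
    unfolding M_def DBD_eig v_def
    by (simp only: matrix_vector_mul_assoc[symmetric] inner_mv)
  define w where "w = L *v v"
  have q3: "inner v (D *v v) = inner w (M *v w)"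
  proof -
    have "M *v w = L *v (D *v v)"
      unfolding M_def DBD_eig w_def
      by (simp only: matrix_vector_mul_assoc[symmetric])
        (simp only: matrix_vector_mul_assoc L_orth matrix_vector_mul_lid)
    then have "inner w (M *v w) = inner (transpose L *v (L *v v)) (D *v v)"
      unfolding w_def by (simp only: inner_mv)
    also have "transpose L *v (L *v v) = v"
      by (simp only: matrix_vector_mul_assoc L_orth matrix_vector_mul_lid)
    finally show ?thesis by simp
  qed
  have nw: "inner w w = inner v v"
  proof -
    have "inner w w = inner (transpose L *v (L *v v)) v"
      unfolding w_def by (simp only: inner_mv)
    also have "transpose L *v (L *v v) = v"
      by (simp only: matrix_vector_mul_assoc L_orth matrix_vector_mul_lid)
    finally show ?thesis .
  qed
  define u :: "real^'k" where "u = (\<chi> m. w $ m / sqrt (nn m))"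
  have Du: "Delta *v u = w"
    unfolding Delta_def u_def diag_mult using sq0
    by (simp add: vec_eq_iff nn_def)
  define z where "z = Theta *v u"
  have G: "transpose Theta ** Theta = Delta ** Delta"
  proof -
    have "Delta ** Delta = (\<chi> a b. if a = b then nn a else 0)"
      unfolding Delta_def
      by (simp add: vec_eq_iff matrix_matrix_mult_def right_diff_distrib if0_mult)
        (simp add: nn_def)
    then show ?thesis using gram[OF memb] unfolding nn_def by simp
  qed
  have Tz: "transpose Theta *v z = Delta *v w"
    unfolding z_def by (simp only: matrix_vector_mul_assoc G) (simp only: matrix_vector_mul_assoc[symmetric] Du)
  have q4: "inner w (M *v w) = inner z ((Theta ** B ** transpose Theta) *v z)"
  proof -
    have "inner z ((Theta ** B ** transpose Theta) *v z) = inner (transpose Theta *v z) (B *v (transpose Theta *v z))"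
      by (simp only: matrix_vector_mul_assoc[symmetric] inner_mv)
    also have "\<dots> = inner w (M *v w)"
      unfolding Tz M_def
      by (simp only: matrix_vector_mul_assoc[symmetric] inner_mv Dsym)
    finally show ?thesis by simp
  qed
  have nz: "inner z z = inner w w"
  proof -
    have "inner z z = inner (transpose Theta *v z) u"
      by (subst (2) z_def) (simp only: inner_mv)
    also have "\<dots> = inner w w"
      unfolding Tz using inner_mv[of w Delta u] Du Dsym by metis
    finally show ?thesis .
  qed
  define s where "s = transpose U *v z"
  have q5: "inner z ((Theta ** B ** transpose Theta) *v z) = inner s (Sigma *v s)"
    unfolding P_eig s_def
    by (simp only: matrix_vector_mul_assoc[symmetric] inner_mv)
  have q6: "inner s (Sigma *v s) \<le> iota * norm s ^ 2"
    using diag_quad[OF Sigma_diag] Sigma_bd by blast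
  have q7: "norm s ^ 2 \<le> norm z ^ 2"
    unfolding s_def by (rule bessel_aux[OF U_orth])
  have iota_pos: "iota > 0" using Sigma_bd by (meson less_le_trans)
  have "eta \<le> inner e (B *v e)" using Be sep kl by simp
  also have "\<dots> = inner s (Sigma *v s)" using q1 q2 q3 q4 q5 by simp
  also have "\<dots> \<le> iota * norm z ^ 2"
    using q6 q7 iota_pos by (meson mult_left_mono less_imp_le order_trans)
  also have "norm z ^ 2 = norm v ^ 2"
    using nz nw by (simp add: power2_norm_eq_inner)
  finally have "eta / iota \<le> norm v ^ 2" using iota_pos by (simp add: field_simps)
  then have "sqrt (eta / iota) \<le> norm v" using real_le_lsqrt real_sqrt_le_iff
    by (metis norm_ge_zero real_sqrt_le_mono real_sqrt_unique)
  then show "norm ((1 / sqrt (real (comm_size Theta k))) *\<^sub>R (L $ k)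
               - (1 / sqrt (real (comm_size Theta l))) *\<^sub>R (L $ l)) \<ge> sqrt (eta / iota)"
    using veq by (simp add: nn_def)
qed

end
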